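(* Let $-\infty\le a<\infty$ and let $s$ be a positive, twice differentiable function on $(a,\infty)$ such that $b=-\log s$ is convex. Suppose the Laplace transform $L(\lambda)=e^{k(\lambda)}=\int_a^\infty e^{-\lambda x}s(x)\,dx$ is finite on a nonempty open interval $\Lambda$. Let $\lambda_1<\lambda_2$ be in $\Lambda$, $p\in(0,1)$, and set $$p_1=pe^{-k(\lambda_1)},\quad p_2=(1-p)e^{-k(\lambda_2)},\quad c=\frac{\lambda_2-\lambda_1}{2},\quad d=\log\sqrt{p_1/p_2}.$$ Assume that for all $x>a$ we have $b''(x)>0$ and $$\frac{c}{\sqrt{b''(x)}}\le\cosh(cx+d).$$ Then the probability density on $(a,\infty)$ $$f(x)=\left(pe^{-\lambda_1x-k(\lambda_1)}+(1-p)e^{-\lambda_2x-k(\lambda_2)}\right)s(x)$$ has a nondecreasing hazard rate $x\mapsto f(x)/\int_x^\infty f(t)\,dt$ on $(a,\infty)$.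
   Context: The hazard rate of a probability density $f$ on $(a,\infty)$ is $h(x)=f(x)/\int_x^\infty f(t)\,dt$. *)

theory Defs
  imports "HOL-Analysis.Analysis"
begin

definition laplace_tr :: "ereal \<Rightarrow> (real \<Rightarrow> real) \<Rightarrow> real \<Rightarrow> real" where
  "laplace_tr a s lam = (LINT x:{x. a < ereal x}|lborel. exp (- lam * x) * s x)"

definition hazard_rate :: "(real \<Rightarrow> real) \<Rightarrow> real \<Rightarrow> real" where
  "hazard_rate f x = f x / (LINT t:{x<..}|lborel. f t)"

end

theory Submission
  imports Defs
begin

lemma hazard_mono_aux:
  fixes f :: "real \<Rightarrow> real" and D :: "real set"
  assumes up: "\<And>x y. x \<in> D \<Longrightarrow> x \<le> y \<Longrightarrow> y \<in> D"
    and pos: "\<And>x. x \<in> D \<Longrightarrow> f x > 0"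
    and int: "set_integrable lborel D f"
    and meas: "D \<in> sets lborel"
    and lc: "\<And>x w \<delta>. x \<in> D \<Longrightarrow> x \<le> w \<Longrightarrow> \<delta> \<ge> 0 \<Longrightarrow> f (w+\<delta>) * f x \<le> f (x+\<delta>) * f w"
  shows "mono_on D (hazard_rate f)"
proof (rule mono_onI)
  define S where "S t = (LINT u:{t<..}|lborel. f u)" for t
  have sub: "{t<..} \<subseteq> D" if "t \<in> D" for t using up that by auto
  have intS: "set_integrable lborel {t<..} f" if "t \<in> D" for t
    by (rule set_integrable_subset[OF int _ sub[OF that]]) simp
  have Spos: "S t > 0" if t: "t \<in> D" for t
  proof -
    have "S t \<ge> 0" unfolding S_def set_lebesgue_integral_def
      by (rule integral_nonneg_AE) (use pos sub[OF t] in \<open>auto simp: indicator_def intro!: AE_I2 less_imp_le\<close>)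
    moreover have "S t \<noteq> 0"
    proof
      assume "S t = 0"
      have ii: "(\<lambda>x. indicator {t<..} x * (indicator {t<..} x * f x) :: real) = (\<lambda>x. indicator {t<..} x * f x)"
        by (auto simp: indicator_def fun_eq_iff)
      have "{t<..} \<in> null_sets lborel"
        apply (rule null_if_pos_func_has_zero_int[where f="\<lambda>u. indicator {t<..} u * f u"])
        using intS[OF t] \<open>S t = 0\<close> pos sub[OF t]
        by (auto simp: set_integrable_def S_def set_lebesgue_integral_def ii)
      then have "{t<..t+1} \<in> null_sets lborel" by (rule null_sets_subset) auto
      then show False by (simp add: null_sets_def)
    qed
    ultimately show ?thesis by simp
  qed
  fix x y assume x: "x \<in> D" and y: "y \<in> D" and xy: "x \<le> y"
  define \<delta> where "\<delta> = y - x"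
  have int_shift: "set_integrable lborel {y<..} (\<lambda>u. f (u - \<delta>))"
  proof -
    have "integrable lborel (\<lambda>u. indicator {x<..} (-\<delta> + 1 * u) *\<^sub>R f (-\<delta> + 1 * u))"
      by (rule lborel_integrable_real_affine[OF intS[OF x, unfolded set_integrable_def]]) simp
    moreover have "(\<lambda>u. indicator {x<..} (-\<delta> + 1 * u) *\<^sub>R f (-\<delta> + 1 * u)) = (\<lambda>u. indicator {y<..} u *\<^sub>R f (u - \<delta>))"
      by (auto simp: \<delta>_def indicator_def fun_eq_iff algebra_simps)
    ultimately show ?thesis by (simp add: set_integrable_def)
  qed
  have Sx: "S x = (LINT u:{y<..}|lborel. f (u - \<delta>))"
  proof -
    have "S x = \<bar>1\<bar> *\<^sub>R integral\<^sup>L lborel (\<lambda>u. indicator {x<..} (-\<delta> + 1 * u) *\<^sub>R f (-\<delta> + 1 * u))"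
      unfolding S_def set_lebesgue_integral_def
      by (rule lborel_integral_real_affine) simp
    also have "(\<lambda>u. indicator {x<..} (-\<delta> + 1 * u) *\<^sub>R f (-\<delta> + 1 * u)) = (\<lambda>u. indicator {y<..} u *\<^sub>R f (u - \<delta>))"
      by (auto simp: \<delta>_def indicator_def fun_eq_iff algebra_simps)
    finally show ?thesis by (simp add: set_lebesgue_integral_def)
  qed
  have "f x * S y = (LINT u:{y<..}|lborel. f x * f u)"
    unfolding S_def by (simp add: set_integral_mult_right)
  also have "\<dots> \<le> (LINT u:{y<..}|lborel. f y * f (u - \<delta>))"
  proof (rule set_integral_mono)
    show "set_integrable lborel {y<..} (\<lambda>u. f x * f u)"
      using intS[OF y] by (rule set_integrable_mult_right)
    show "set_integrable lborel {y<..} (\<lambda>u. f y * f (u - \<delta>))"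
      using int_shift by (rule set_integrable_mult_right)
    fix u assume u: "u \<in> {y<..}"
    have "f ((u - \<delta>) + \<delta>) * f x \<le> f (x + \<delta>) * f (u - \<delta>)"
      by (rule lc) (use x u \<delta>_def xy in auto)
    then show "f x * f u \<le> f y * f (u - \<delta>)" by (simp add: \<delta>_def mult.commute)
  qed
  also have "\<dots> = f y * S x" by (simp add: Sx set_integral_mult_right)
  finally have ineq: "f x * S y \<le> f y * S x" .
  show "hazard_rate f x \<le> hazard_rate f y"
    unfolding hazard_rate_def S_def[symmetric]
    using Spos[OF x] Spos[OF y] ineq by (simp add: divide_simps mult.commute)
qed

lemma lc_from_deriv:
  fixes \<phi> \<phi>' \<phi>'' :: "real \<Rightarrow> real" and D :: "real set"
  assumes up: "\<And>x y. x \<in> D \<Longrightarrow> x \<le> y \<Longrightarrow> y \<in> D"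
    and d1: "\<And>z. z \<in> D \<Longrightarrow> (\<phi> has_real_derivative \<phi>' z) (at z)"
    and d2: "\<And>z. z \<in> D \<Longrightarrow> (\<phi>' has_real_derivative \<phi>'' z) (at z)"
    and neg: "\<And>z. z \<in> D \<Longrightarrow> \<phi>'' z \<le> 0"
    and x: "x \<in> D" and xw: "x \<le> w" and \<delta>: "\<delta> \<ge> 0"
  shows "\<phi> (w+\<delta>) - \<phi> w \<le> \<phi> (x+\<delta>) - \<phi> x"
proof -
  have anti: "\<phi>' v \<le> \<phi>' u" if "u \<in> D" "u \<le> v" for u v
    by (rule DERIV_nonpos_imp_nonincreasing[OF \<open>u \<le> v\<close>])
       (use d2 neg up that in blast)
  have "(\<lambda>z. \<phi> (z+\<delta>) - \<phi> z) w \<le> (\<lambda>z. \<phi> (z+\<delta>) - \<phi> z) x"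
  proof (rule DERIV_nonpos_imp_nonincreasing[OF xw])
    fix z assume z: "x \<le> z" "z \<le> w"
    have zD: "z \<in> D" using up x z by blast
    have zD2: "z + \<delta> \<in> D" using up zD \<delta> by simp
    have "((\<lambda>z. \<phi> (z+\<delta>) - \<phi> z) has_real_derivative \<phi>' (z+\<delta>) * 1 - \<phi>' z) (at z)"
    proof (rule DERIV_diff[OF _ d1[OF zD]])
      show "((\<lambda>z. \<phi> (z+\<delta>)) has_real_derivative \<phi>' (z+\<delta>) * 1) (at z)"
        by (rule DERIV_chain2[where g="\<lambda>z. z+\<delta>", OF d1[OF zD2]]) (auto intro!: derivative_eq_intros)
    qed
    moreover have "\<phi>' (z+\<delta>) * 1 - \<phi>' z \<le> 0" using anti[OF zD, of "z+\<delta>"] \<delta> by simp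
    ultimately show "\<exists>y. ((\<lambda>z. \<phi> (z+\<delta>) - \<phi> z) has_real_derivative y) (at z) \<and> y \<le> 0" by blast
  qed
  then show ?thesis by simp
qed

theorem proposition2:
  fixes a :: ereal and s :: "real \<Rightarrow> real" and \<Lambda> :: "real set"
    and lam1 lam2 p :: real
  defines "D \<equiv> {x::real. a < ereal x}"
  defines "b \<equiv> (\<lambda>x. - ln (s x))"
  defines "k \<equiv> (\<lambda>lam. ln (laplace_tr a s lam))"
  defines "p1 \<equiv> p * exp (- k lam1)"
  defines "p2 \<equiv> (1 - p) * exp (- k lam2)"
  defines "c \<equiv> (lam2 - lam1) / 2"
  defines "d \<equiv> ln (sqrt (p1 / p2))"
  defines "f \<equiv> (\<lambda>x. (p * exp (- lam1 * x - k lam1) + (1 - p) * exp (- lam2 * x - k lam2)) * s x)"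
  assumes a_fin: "a < \<infinity>"
    and s_pos: "\<forall>x\<in>D. s x > 0"
    and s_diff: "\<forall>x\<in>D. s differentiable (at x)"
    and s_diff2: "\<forall>x\<in>D. deriv s differentiable (at x)"
    and b_convex: "convex_on D b"
    and Lambda_open: "open \<Lambda>" and Lambda_interval: "is_interval \<Lambda>" and Lambda_ne: "\<Lambda> \<noteq> {}"
    and laplace_finite: "\<forall>lam\<in>\<Lambda>. set_integrable lborel D (\<lambda>x. exp (- lam * x) * s x)"
    and lam1: "lam1 \<in> \<Lambda>" and lam2: "lam2 \<in> \<Lambda>" and lam12: "lam1 < lam2"
    and p: "0 < p" "p < 1"
    and b2_pos: "\<forall>x\<in>D. deriv (deriv b) x > 0"
    and cosh_cond: "\<forall>x\<in>D. c / sqrt (deriv (deriv b) x) \<le> cosh (c * x + d)"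
  shows "mono_on D (hazard_rate f)"
proof -
  define K1 where "K1 = k lam1"
  define K2 where "K2 = k lam2"
  define A where "A = (\<lambda>x. p * exp (- lam1 * x - K1))"
  define B where "B = (\<lambda>x. (1 - p) * exp (- lam2 * x - K2))"
  have f_eq: "f x = (A x + B x) * s x" for x by (simp add: f_def A_def B_def K1_def K2_def)
  have Apos: "A x > 0" for x using p by (simp add: A_def)
  have Bpos: "B x > 0" for x using p by (simp add: B_def)
  have up: "y \<in> D" if "x \<in> D" "x \<le> y" for x y
    using that unfolding D_def by (auto intro: less_le_trans)
  have openD: "open D"
  proof (cases a)
    case (real r) then have "D = {r<..}" by (auto simp: D_def)
    then show ?thesis by simp
  next
    case PInf then show ?thesis using a_fin by simp
  next
    case MInf then have "D = UNIV" by (auto simp: D_def)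
    then show ?thesis by simp
  qed
  have measD: "D \<in> sets lborel" using openD by simp
  have fpos: "f x > 0" if "x \<in> D" for x using Apos[of x] Bpos[of x] s_pos that by (simp add: f_eq)
  have intf: "set_integrable lborel D f"
  proof -
    have i1: "set_integrable lborel D (\<lambda>x. (p * exp (- K1)) * (exp (- lam1 * x) * s x))"
      using laplace_finite lam1 by (intro set_integrable_mult_right) auto
    have i2: "set_integrable lborel D (\<lambda>x. ((1 - p) * exp (- K2)) * (exp (- lam2 * x) * s x))"
      using laplace_finite lam2 by (intro set_integrable_mult_right) auto
    have "set_integrable lborel D (\<lambda>x. (p * exp (- K1)) * (exp (- lam1 * x) * s x) + ((1 - p) * exp (- K2)) * (exp (- lam2 * x) * s x))"
      by (rule set_integral_add(1)[OF i1 i2])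
    moreover have "(\<lambda>x. (p * exp (- K1)) * (exp (- lam1 * x) * s x) + ((1 - p) * exp (- K2)) * (exp (- lam2 * x) * s x)) = f"
      by (auto simp: fun_eq_iff f_def K1_def K2_def exp_diff exp_minus field_simps)
    ultimately show ?thesis by simp
  qed
  have ds: "(s has_real_derivative deriv s z) (at z)" if "z \<in> D" for z
    using s_diff that DERIV_deriv_iff_real_differentiable by blast
  have dds: "(deriv s has_real_derivative deriv (deriv s) z) (at z)" if "z \<in> D" for z
    using s_diff2 that DERIV_deriv_iff_real_differentiable by blast
  have db0: "(b has_real_derivative - (deriv s z / s z)) (at z)" if "z \<in> D" for z
    unfolding b_def using ds[OF that] s_pos that
    by (auto intro!: derivative_eq_intros simp: field_simps)
  have db: "(b has_real_derivative deriv b z) (at z)" if "z \<in> D" for z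
    using db0[OF that] DERIV_imp_deriv by metis
  have ddb: "(deriv b has_real_derivative deriv (deriv b) z) (at z)" if z: "z \<in> D" for z
  proof -
    define \<beta> where "\<beta> = (\<lambda>z. - (deriv s z / s z))"
    have "(\<beta> has_real_derivative - ((deriv (deriv s) z * s z - deriv s z * deriv s z) / (s z * s z))) (at z)"
      unfolding \<beta>_def using ds[OF z] dds[OF z] s_pos z
      by (auto intro!: derivative_eq_intros simp: field_simps)
    then have "(deriv b has_real_derivative - ((deriv (deriv s) z * s z - deriv s z * deriv s z) / (s z * s z))) (at z)"
      by (rule has_field_derivative_transform_within_open[OF _ openD z])
         (use db0 DERIV_imp_deriv in \<open>metis \<beta>_def\<close>)
    then show ?thesis using DERIV_imp_deriv by metis
  qed
  have dA: "(A has_real_derivative - lam1 * A z) (at z)" for z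
    unfolding A_def by (auto intro!: derivative_eq_intros)
  have dB: "(B has_real_derivative - lam2 * B z) (at z)" for z
    unfolding B_def by (auto intro!: derivative_eq_intros)
  define \<phi> where "\<phi> = (\<lambda>z. ln (A z + B z) - b z)"
  define \<phi>' where "\<phi>' = (\<lambda>z. (- lam1 * A z - lam2 * B z) / (A z + B z) - deriv b z)"
  define \<phi>'' where "\<phi>'' = (\<lambda>z. ((lam1^2 * A z + lam2^2 * B z) * (A z + B z) - (- lam1 * A z - lam2 * B z)^2) / (A z + B z)^2 - deriv (deriv b) z)"
  have d1: "(\<phi> has_real_derivative \<phi>' z) (at z)" if z: "z \<in> D" for z
    unfolding \<phi>_def \<phi>'_def
    using Apos[of z] Bpos[of z]
    by (auto intro!: derivative_eq_intros dA dB db[OF z] simp: field_simps)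
  have d2: "(\<phi>' has_real_derivative \<phi>'' z) (at z)" if z: "z \<in> D" for z
    unfolding \<phi>'_def \<phi>''_def
    using Apos[of z] Bpos[of z]
    by (auto intro!: derivative_eq_intros dA dB ddb[OF z] simp: field_simps power2_eq_square)
  have neg: "\<phi>'' z \<le> 0" if z: "z \<in> D" for z
  proof -
    define \<beta>2 where "\<beta>2 = deriv (deriv b) z"
    define u where "u = c * z + d"
    define E where "E = exp u"
    have b2: "\<beta>2 > 0" using b2_pos z by (simp add: \<beta>2_def)
    have cpos: "c > 0" using lam12 by (simp add: c_def)
    have "c / sqrt \<beta>2 \<le> cosh u" using cosh_cond z by (simp add: \<beta>2_def u_def)
    then have "c \<le> cosh u * sqrt \<beta>2" using b2 by (simp add: divide_le_eq)
    then have "c^2 \<le> (cosh u * sqrt \<beta>2)^2" using cpos by (intro power_mono) auto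
    then have c2: "c^2 \<le> cosh u ^2 * \<beta>2" using b2 by (simp add: power_mult_distrib)
    have p1p: "p1 > 0" and p2p: "p2 > 0" using p by (simp_all add: p1_def p2_def)
    have p1p2: "p1 / p2 > 0" using p1p p2p by simp
    have ed: "exp d * exp d = p1 / p2"
      using p1p p2p by (simp add: d_def mult_exp_exp[symmetric] del: mult_exp_exp)
    have AE: "A z = B z * E * E"
    proof -
      have e1: "E * E = exp ((lam2 - lam1) * z) * (exp d * exp d)"
        by (simp add: E_def u_def mult_exp_exp c_def field_simps)
      have e2: "B z = p2 * exp (- lam2 * z)"
        by (simp add: B_def p2_def K2_def exp_diff exp_minus field_simps)
      have e3: "A z = p1 * exp (- lam1 * z)"
        by (simp add: A_def p1_def K1_def exp_diff exp_minus field_simps)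
      have e4: "exp (- lam2 * z) * exp ((lam2 - lam1) * z) = exp (- lam1 * z)"
        by (simp add: mult_exp_exp algebra_simps)
      have "B z * E * E = p2 * exp (- lam2 * z) * exp ((lam2 - lam1) * z) * (p1 / p2)"
        by (simp only: e2 mult.assoc e1 ed)
      also have "\<dots> = p1 * (exp (- lam2 * z) * exp ((lam2 - lam1) * z))"
        using p2p by (simp add: field_simps)
      also have "\<dots> = A z" by (simp only: e4 e3)
      finally show ?thesis by simp
    qed
    have Epos: "E > 0" by (simp add: E_def)
    have ch: "4 * cosh u ^ 2 * (A z * B z) = (A z + B z)^2"
      unfolding AE cosh_def E_def using Epos
      by (simp add: exp_minus field_simps power2_eq_square E_def)
    have num: "(lam1^2 * A z + lam2^2 * B z) * (A z + B z) - (- lam1 * A z - lam2 * B z)^2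
             = 4 * c^2 * (A z * B z)"
      by (simp add: c_def power2_eq_square algebra_simps)
    have ABpos: "A z * B z > 0" using Apos Bpos by simp
    have "4 * c^2 * (A z * B z) \<le> 4 * (cosh u ^2 * \<beta>2) * (A z * B z)"
      using c2 ABpos by (intro mult_right_mono) auto
    also have "\<dots> = \<beta>2 * (A z + B z)^2" using ch by (simp add: algebra_simps)
    finally have "4 * c^2 * (A z * B z) / (A z + B z)^2 \<le> \<beta>2"
      using Apos[of z] Bpos[of z] by (simp add: divide_le_eq)
    then show ?thesis unfolding \<phi>''_def num \<beta>2_def by simp
  qed
  have phi_ln: "\<phi> z = ln (f z)" if "z \<in> D" for z
  proof -
    have "s z > 0" using s_pos that by blast
    then show ?thesis using Apos[of z] Bpos[of z] by (simp add: \<phi>_def b_def f_eq ln_mult)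
  qed
  have lc: "f (w+\<delta>) * f x \<le> f (x+\<delta>) * f w" if x: "x \<in> D" and xw: "x \<le> w" and \<delta>: "\<delta> \<ge> 0" for x w \<delta>
  proof -
    have w: "w \<in> D" using up x xw by blast
    have xd: "x + \<delta> \<in> D" using up x \<delta> by simp
    have wd: "w + \<delta> \<in> D" using up w \<delta> by simp
    have "\<phi> (w+\<delta>) - \<phi> w \<le> \<phi> (x+\<delta>) - \<phi> x"
      by (rule lc_from_deriv[OF up d1 d2 neg x xw \<delta>])
    moreover have "f (w+\<delta>) > 0" "f x > 0" "f (x+\<delta>) > 0" "f w > 0" using fpos x w xd wd by auto
    ultimately have "ln (f (w+\<delta>) * f x) \<le> ln (f (x+\<delta>) * f w)"
      using phi_ln x w xd wd by (simp add: ln_mult)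
    then show ?thesis using fpos x w xd wd by (simp add: mult_pos_pos)
  qed
  show ?thesis
    by (rule hazard_mono_aux[OF up fpos intf measD lc])
qed

end
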